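(* Let $d\ge 2$, let $\sigma_1,\dots,\sigma_d>0$ and $\Sigma=\operatorname{diag}(\sigma_1^2,\dots,\sigma_d^2)$, let $\nu>0$, let $P$ be a $d\times d$ permutation matrix, and let $X\in\mathbb{R}^d$. For $l\in\mathbb{R}^{d(d-1)/2}$ let $L=L(l)$ be the strictly lower-triangular $d\times d$ matrix whose strictly lower-triangular entries are the components of $l$, and set $$\Theta(l)=(I-PLP^\top)^\top\,\Sigma^{-1}\,(I-PLP^\top).$$ Define the marginal likelihood $$p(X\mid \Sigma,\nu,P)=\int_{\mathbb{R}^{d(d-1)/2}} \mathcal{N}\big(X;0,\Theta(l)^{-1}\big)\,\mathcal{N}\big(l;0,\nu^2 I\big)\,dl ,$$ where $\mathcal{N}(\cdot\,;0,C)$ denotes the centered Gaussian density with covariance $C$. Let $G$ be the $d\times d$ strictly lower-triangular matrix with all strictly lower-triangular entries equal to $1$, let $X^2$ denote the entrywise square of $X$, and let $D=\operatorname{diag}(PGP^\top X^2)$ (the diagonal matrix whose diagonal is the vector $PGP^\top X^2$). Suppose $D$ has exactly one zero diagonal entry, at index $i$ (this holds for almost every $X$). Let $\Sigma',D'\in\mathbb{R}^{(d-1)\times(d-1)}$ be obtained from $\Sigma,D$ by deleting the $i$th row and column, and let $S$ be the $d\times d$ diagonal matrix with $S_{jj}=\dfrac{\nu^2 D_{jj}}{\sigma_j^2(\sigma_j^2+\nu^2D_{jj})}$. Then $$\log p(X\mid\Sigma,\nu,P) = -\frac d2\log 2\pi-\sum_{j=1}^d\log\sigma_j-(d-1)\log\nu+\frac12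 X^\top(S-\Sigma^{-1})X-\frac12\log\det D'-\frac12\log\det\big(\Sigma'^{-1}+\nu^{-2}D'^{-1}\big).$$
   Context: This is the marginal likelihood of a single observation $X$ from a linear-Gaussian structural equation model $X=W^\top X+\epsilon$, $\epsilon\sim\mathcal{N}(0,\Sigma)$, with $W^\top=PLP^\top$ (a DAG adjacency matrix written via a permutation $P$ and strictly lower-triangular weight matrix $L$), after integrating out the edge weights $l$ under an isotropic Gaussian prior $\mathcal{N}(0,\nu^2 I)$. Note $\det(I-PLP^\top)=1$, so $\det\Theta(l)=\det\Sigma^{-1}$. *)

theory Defs
  imports "HOL-Probability.Probability"
          "Jordan_Normal_Form.Determinant"
          "Jordan_Normal_Form.Gauss_Jordan_Elimination"
begin

definition minv :: "real mat \<Rightarrow> real mat" where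
  "minv A = the (mat_inverse A)"

definition diagm :: "nat \<Rightarrow> (nat \<Rightarrow> real) \<Rightarrow> real mat" where
  "diagm n f = mat n n (\<lambda>(i,j). if i = j then f i else 0)"

definition is_perm_mat :: "nat \<Rightarrow> real mat \<Rightarrow> bool" where
  "is_perm_mat d P \<longleftrightarrow> (\<exists>\<pi>. \<pi> permutes {..<d} \<and>
      P = mat d d (\<lambda>(i,j). if i = \<pi> j then 1 else 0))"

text \<open>Index set of the strictly lower triangular entries of a d x d matrix;
  it has d(d-1)/2 elements, so functions on it are the vectors l.\<close>
definition lower_idx :: "nat \<Rightarrow> (nat \<times> nat) set" where
  "lower_idx d = {(j,k). k < j \<and> j < d}"

definition lower_mat :: "nat \<Rightarrow> (nat \<times> nat \<Rightarrow> real) \<Rightarrow> real mat" where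
  "lower_mat d l = mat d d (\<lambda>(j,k). if k < j then l (j,k) else 0)"

definition Theta :: "nat \<Rightarrow> real mat \<Rightarrow> real mat \<Rightarrow> (nat \<times> nat \<Rightarrow> real) \<Rightarrow> real mat" where
  "Theta d Sig P l =
     (let B = 1\<^sub>m d - P * lower_mat d l * transpose_mat P
      in transpose_mat B * minv Sig * B)"

definition gauss_density :: "nat \<Rightarrow> real mat \<Rightarrow> real vec \<Rightarrow> real" where
  "gauss_density n C x =
     (2 * pi) powr (- real n / 2) * det C powr (- 1 / 2) *
     exp (- (1 / 2) * (x \<bullet> (minv C *\<^sub>v x)))"

definition marg_lik :: "nat \<Rightarrow> real mat \<Rightarrow> real \<Rightarrow> real mat \<Rightarrow> real vec \<Rightarrow> real" where
  "marg_lik d Sig \<nu> P X =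
     (\<integral>l. gauss_density d (minv (Theta d Sig P l)) X *
          (\<Prod>p\<in>lower_idx d. normal_density 0 \<nu> (l p))
       \<partial>(PiM (lower_idx d) (\<lambda>_. lborel)))"

definition Gmat :: "nat \<Rightarrow> real mat" where
  "Gmat d = mat d d (\<lambda>(j,k). if k < j then 1 else 0)"

definition Dmat :: "nat \<Rightarrow> real mat \<Rightarrow> real vec \<Rightarrow> real mat" where
  "Dmat d P X = diagm d (\<lambda>j. ((P * Gmat d * transpose_mat P) *\<^sub>v
                               vec d (\<lambda>k. (X $ k)\<^sup>2)) $ j)"

end

theory Submission
  imports Defs
begin

lemma diagm_carrier[simp]: "diagm n f \<in> carrier_mat n n"
  by (simp add: diagm_def)

lemma diagm_index[simp]: "i < n \<Longrightarrow> j < n \<Longrightarrow> diagm n f $$ (i,j) = (if i = j then f i else 0)"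
  by (simp add: diagm_def)

lemma diagm_dim[simp]: "dim_row (diagm n f) = n" "dim_col (diagm n f) = n"
  by (simp_all add: diagm_def)

lemma minv_eq:
  assumes A: "A \<in> carrier_mat n n" and B: "B \<in> carrier_mat n n"
    and AB: "A * B = 1\<^sub>m n" and BA: "B * A = 1\<^sub>m n"
  shows "minv A = B"
proof -
  have "A \<in> Units (ring_mat TYPE(real) n n)"
    using A B AB BA unfolding Units_def by (auto simp: ring_mat_def)
  then have "mat_inverse A \<noteq> None" using mat_inverse(1)[OF A, where b=n] by metis
  then obtain B' where s: "mat_inverse A = Some B'" by auto
  from mat_inverse(2)[OF A s] have B': "A * B' = 1\<^sub>m n" "B' * A = 1\<^sub>m n" "B' \<in> carrier_mat n n"
    by auto
  have "B' = B' * (A * B)" using AB B' by simp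
  also have "\<dots> = (B' * A) * B" using B'(3) A B by (rule assoc_mult_mat[symmetric])
  also have "\<dots> = B" unfolding B'(2) using B by (rule left_mult_one_mat)
  finally show ?thesis using s unfolding minv_def by simp
qed

lemma minv_props:
  assumes A: "A \<in> carrier_mat n n" and d: "det A \<noteq> 0"
  shows "minv A \<in> carrier_mat n n" "A * minv A = 1\<^sub>m n" "minv A * A = 1\<^sub>m n"
proof -
  have "A \<in> Units (ring_mat TYPE(real) n n)" using det_non_zero_imp_unit[OF A d] .
  then have "mat_inverse A \<noteq> None" using mat_inverse(1)[OF A, where b=n] by metis
  then obtain B' where s: "mat_inverse A = Some B'" by auto
  from mat_inverse(2)[OF A s] show "minv A \<in> carrier_mat n n" "A * minv A = 1\<^sub>m n" "minv A * A = 1\<^sub>m n"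
    using s unfolding minv_def by auto
qed

lemma minv_minv:
  assumes A: "A \<in> carrier_mat n n" and d: "det A \<noteq> 0"
  shows "minv (minv A) = A"
  using minv_props[OF A d] by (intro minv_eq[of _ n]) (auto simp: A)

lemma det_minv:
  assumes A: "A \<in> carrier_mat n n" and d: "det A \<noteq> 0"
  shows "det (minv A) = 1 / det A"
proof -
  have "det A * det (minv A) = det (A * minv A)" using det_mult[OF A minv_props(1)[OF A d]] by simp
  also have "\<dots> = 1" using minv_props(2)[OF A d] by simp
  finally show ?thesis using d by (simp add: field_simps)
qed

lemma if_mult_zero: "(if P then a else 0) * (b::real) = (if P then a * b else 0)" by simp
lemma mult_if_zero: "(b::real) * (if P then a else 0) = (if P then b * a else 0)" by simp

lemma diagm_mult: "diagm n f * diagm n g = diagm n (\<lambda>i. f i * g i)"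
  by (rule eq_matI) (auto simp: diagm_def scalar_prod_def row_def col_def if_mult_zero mult_if_zero)

lemma minv_diagm: assumes "\<forall>i<n. f i \<noteq> 0" shows "minv (diagm n f) = diagm n (\<lambda>i. 1 / f i)"
  apply (rule minv_eq[of _ n])
  using assms by (auto simp: diagm_mult intro!: eq_matI)

lemma det_diagm: "det (diagm n f) = (\<Prod>i<n. f i)"
proof -
  have "det (diagm n f) = prod_list (diag_mat (diagm n f))"
    by (rule det_upper_triangular[of _ n]) auto
  also have "\<dots> = (\<Prod>i<n. f i)"
    by (simp add: diag_mat_def prod.distinct_set_conv_list[symmetric] atLeast0LessThan)
  finally show ?thesis .
qed

lemma mat_delete_diagm: "i < n \<Longrightarrow> mat_delete (diagm n f) i i = diagm (n - 1) (\<lambda>j. f (if j < i then j else Suc j))"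
  by (rule eq_matI) (auto simp: mat_delete_def)

lemma diagm_add: "diagm n f + c \<cdot>\<^sub>m diagm n g = diagm n (\<lambda>i. f i + c * g i)"
  by (rule eq_matI) auto

lemma diagm_minus: "diagm n f - diagm n g = diagm n (\<lambda>i. f i - g i)"
  by (rule eq_matI) auto

lemma diagm_quad: "x \<in> carrier_vec n \<Longrightarrow> x \<bullet> (diagm n f *\<^sub>v x) = (\<Sum>j<n. f j * (x $ j)^2)"
  by (auto simp: scalar_prod_def diagm_def mult_mat_vec_def row_def if_mult_zero mult_if_zero power2_eq_square atLeast0LessThan intro!: sum.cong)

abbreviation iperm :: "(nat \<Rightarrow> nat) \<Rightarrow> nat \<Rightarrow> nat" where "iperm f \<equiv> inv_into UNIV f"

definition pmat :: "nat \<Rightarrow> (nat \<Rightarrow> nat) \<Rightarrow> real mat" where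
  "pmat d \<pi> = mat d d (\<lambda>(i,j). if i = \<pi> j then 1 else 0)"

lemma pmat_carrier[simp]: "pmat d \<pi> \<in> carrier_mat d d" by (simp add: pmat_def)

lemma perm_sum_delta:
  assumes p: "\<pi> permutes {..<d}" and j: "j < d"
  shows "(\<Sum>k<d. if \<pi> k = j then f k else (0::real)) = f (iperm \<pi> j)"
proof -
  have "\<And>k. (\<pi> k = j) = (k = iperm \<pi> j)" using permutes_inv_eq[OF p] by metis
  then have "(\<Sum>k<d. if \<pi> k = j then f k else (0::real)) = (\<Sum>k<d. if k = iperm \<pi> j then f k else 0)"
    by simp
  also have "\<dots> = f (iperm \<pi> j)"
    using j permutes_in_image[OF permutes_inv[OF p]] by simp
  finally show ?thesis .
qed

lemma pmat_mult_vec: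
  assumes p: "\<pi> permutes {..<d}" and v: "v \<in> carrier_vec d" and j: "j < d"
  shows "(pmat d \<pi> *\<^sub>v v) $ j = v $ (iperm \<pi> j)"
proof -
  have "(pmat d \<pi> *\<^sub>v v) $ j = (\<Sum>k<d. (if \<pi> k = j then v $ k else 0))"
    using v j by (auto simp: pmat_def mult_mat_vec_def scalar_prod_def row_def atLeast0LessThan
        if_mult_zero eq_commute[of j] intro!: sum.cong)
  also have "\<dots> = v $ (iperm \<pi> j)"
    by (rule perm_sum_delta[OF p j])
  finally show ?thesis .
qed

lemma pmatT_mult_vec:
  assumes p: "\<pi> permutes {..<d}" and v: "v \<in> carrier_vec d" and j: "j < d"
  shows "(transpose_mat (pmat d \<pi>) *\<^sub>v v) $ j = v $ (\<pi> j)"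
proof -
  have "(transpose_mat (pmat d \<pi>) *\<^sub>v v) $ j = (\<Sum>k<d. (if k = \<pi> j then v $ k else 0))"
    using v j by (auto simp: pmat_def mult_mat_vec_def scalar_prod_def row_def col_def atLeast0LessThan
        if_mult_zero intro!: sum.cong)
  also have "\<dots> = v $ (\<pi> j)"
    using j permutes_in_image[OF p] by simp
  finally show ?thesis .
qed

lemma pmat_pmatT:
  assumes p: "\<pi> permutes {..<d}"
  shows "pmat d \<pi> * transpose_mat (pmat d \<pi>) = 1\<^sub>m d"
proof (rule eq_matI)
  fix i j assume ij: "i < dim_row (1\<^sub>m d)" "j < dim_col (1\<^sub>m d)"
  have "(pmat d \<pi> * transpose_mat (pmat d \<pi>)) $$ (i,j) = (\<Sum>k<d. (if \<pi> k = i then (if j = \<pi> k then 1 else 0) else 0))"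
    using ij by (auto simp: pmat_def scalar_prod_def row_def col_def atLeast0LessThan
        if_mult_zero eq_commute[of i] intro!: sum.cong)
  also have "\<dots> = (if j = \<pi> (iperm \<pi> i) then 1 else 0)"
    using ij by (intro perm_sum_delta[OF p]) auto
  also have "\<dots> = (if j = i then 1 else 0)"
    using ij permutes_inverses[OF p] by auto
  finally show "(pmat d \<pi> * transpose_mat (pmat d \<pi>)) $$ (i,j) = 1\<^sub>m d $$ (i,j)" using ij by auto
qed (auto simp: pmat_def)

lemma det_pmat_sq:
  assumes p: "\<pi> permutes {..<d}"
  shows "det (pmat d \<pi>) * det (pmat d \<pi>) = 1"
proof -
  have "det (pmat d \<pi>) * det (pmat d \<pi>) = det (pmat d \<pi>) * det (transpose_mat (pmat d \<pi>))"
    by (simp add: det_transpose[of _ d])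
  also have "\<dots> = det (pmat d \<pi> * transpose_mat (pmat d \<pi>))"
    by (rule det_mult[symmetric, of _ d]) auto
  also have "\<dots> = 1" using pmat_pmatT[OF p] by simp
  finally show ?thesis .
qed

lemma lower_mat_carrier[simp]: "lower_mat d l \<in> carrier_mat d d" by (simp add: lower_mat_def)

lemma lower_mat_vec:
  assumes w: "w \<in> carrier_vec d" and k: "k < d"
  shows "(lower_mat d l *\<^sub>v w) $ k = (\<Sum>m<k. l (k,m) * w $ m)"
proof -
  have "(lower_mat d l *\<^sub>v w) $ k = (\<Sum>m<d. (if m < k then l (k,m) * w $ m else 0))"
    using w k by (auto simp: lower_mat_def mult_mat_vec_def scalar_prod_def row_def atLeast0LessThan
        if_mult_zero intro!: sum.cong)
  also have "\<dots> = (\<Sum>m<k. l (k,m) * w $ m)"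
    using k by (simp add: sum.If_cases lessThan_def Collect_conj_eq[symmetric] ) (rule sum.cong; auto)
  finally show ?thesis .
qed

lemma det_one_minus_lower: "det (1\<^sub>m d - lower_mat d l) = 1"
proof -
  have "det (1\<^sub>m d - lower_mat d l) = prod_list (diag_mat (1\<^sub>m d - lower_mat d l))"
    by (rule det_lower_triangular[of d]) (auto simp: lower_mat_def)
  also have "\<dots> = 1"
    by (simp add: diag_mat_def lower_mat_def prod.distinct_set_conv_list[symmetric] atLeast0LessThan)
  finally show ?thesis .
qed


lemma pmat_dims[simp]: "dim_row (pmat d \<pi>) = d" "dim_col (pmat d \<pi>) = d"
  by (simp_all add: pmat_def)

lemma PL_carrier[simp]: "pmat d \<pi> * lower_mat d l \<in> carrier_mat d d"
  by (meson mult_carrier_mat pmat_carrier lower_mat_carrier)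

lemma PLPT_carrier[simp]: "pmat d \<pi> * lower_mat d l * transpose_mat (pmat d \<pi>) \<in> carrier_mat d d"
  by (meson mult_carrier_mat pmat_carrier lower_mat_carrier transpose_carrier_mat)

lemma B_carrier[simp]: "1\<^sub>m d - pmat d \<pi> * lower_mat d l * transpose_mat (pmat d \<pi>) \<in> carrier_mat d d"
  by (rule minus_carrier_mat) simp

lemma IL_carrier[simp]: "1\<^sub>m d - lower_mat d l \<in> carrier_mat d d"
  by (rule minus_carrier_mat) simp

lemma PIL_carrier[simp]: "pmat d \<pi> * (1\<^sub>m d - lower_mat d l) \<in> carrier_mat d d"
  by (meson mult_carrier_mat pmat_carrier IL_carrier)

lemma Bmat_factor:
  assumes p: "\<pi> permutes {..<d}"
  shows "1\<^sub>m d - pmat d \<pi> * lower_mat d l * transpose_mat (pmat d \<pi>)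
       = pmat d \<pi> * (1\<^sub>m d - lower_mat d l) * transpose_mat (pmat d \<pi>)"
proof -
  have PT: "transpose_mat (pmat d \<pi>) \<in> carrier_mat d d" by simp
  have "pmat d \<pi> * (1\<^sub>m d - lower_mat d l) = pmat d \<pi> - pmat d \<pi> * lower_mat d l"
    by (subst mult_minus_distrib_mat[of _ d d]) auto
  then have "pmat d \<pi> * (1\<^sub>m d - lower_mat d l) * transpose_mat (pmat d \<pi>)
     = pmat d \<pi> * transpose_mat (pmat d \<pi>) - pmat d \<pi> * lower_mat d l * transpose_mat (pmat d \<pi>)"
    by (simp add: minus_mult_distrib_mat[of "pmat d \<pi>" d d "pmat d \<pi> * lower_mat d l" "transpose_mat (pmat d \<pi>)" d, OF pmat_carrier PL_carrier])
  then show ?thesis using pmat_pmatT[OF p] by simp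
qed

lemma det_Bmat:
  assumes p: "\<pi> permutes {..<d}"
  shows "det (1\<^sub>m d - pmat d \<pi> * lower_mat d l * transpose_mat (pmat d \<pi>)) = 1"
proof -
  have "det (pmat d \<pi> * (1\<^sub>m d - lower_mat d l) * transpose_mat (pmat d \<pi>))
      = det (pmat d \<pi>) * det (1\<^sub>m d - lower_mat d l) * det (transpose_mat (pmat d \<pi>))"
    by (subst det_mult[of _ d]; (subst det_mult[of _ d])?) auto
  also have "\<dots> = 1" using det_pmat_sq[OF p] by (simp add: det_one_minus_lower det_transpose[of _ d])
  finally show ?thesis using Bmat_factor[OF p] by simp
qed

lemma Theta_facts:
  assumes p: "\<pi> permutes {..<d}" and sp: "\<forall>j<d. \<sigma> j > 0" and X: "X \<in> carrier_vec d"
  shows "det (Theta d (diagm d (\<lambda>j. (\<sigma> j)\<^sup>2)) (pmat d \<pi>) l) = (\<Prod>j<d. 1 / (\<sigma> j)\<^sup>2)"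
    and "Theta d (diagm d (\<lambda>j. (\<sigma> j)\<^sup>2)) (pmat d \<pi>) l \<in> carrier_mat d d"
    and "X \<bullet> (Theta d (diagm d (\<lambda>j. (\<sigma> j)\<^sup>2)) (pmat d \<pi>) l *\<^sub>v X)
         = (\<Sum>j<d. (X $ j - (\<Sum>m<iperm \<pi> j. l (iperm \<pi> j, m) * X $ (\<pi> m)))\<^sup>2 / (\<sigma> j)\<^sup>2)"
proof -
  define B where "B = 1\<^sub>m d - pmat d \<pi> * lower_mat d l * transpose_mat (pmat d \<pi>)"
  define Si where "Si = diagm d (\<lambda>j. 1 / (\<sigma> j)\<^sup>2)"
  have B: "B \<in> carrier_mat d d" unfolding B_def by auto
  have BT: "transpose_mat B \<in> carrier_mat d d" using B by simp
  have Si: "Si \<in> carrier_mat d d" unfolding Si_def by simp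
  have msi: "minv (diagm d (\<lambda>j. (\<sigma> j)\<^sup>2)) = Si" unfolding Si_def
    using sp by (subst minv_diagm) auto
  have Th: "Theta d (diagm d (\<lambda>j. (\<sigma> j)\<^sup>2)) (pmat d \<pi>) l = transpose_mat B * Si * B"
    unfolding Theta_def B_def msi Let_def ..
  show "Theta d (diagm d (\<lambda>j. (\<sigma> j)\<^sup>2)) (pmat d \<pi>) l \<in> carrier_mat d d"
    unfolding Th using B BT Si by auto
  have "det (transpose_mat B * Si * B) = det (transpose_mat B) * det Si * det B"
    using B BT Si by (subst det_mult[of _ d]; (subst det_mult[of _ d])?) auto
  also have "\<dots> = det Si" using det_Bmat[OF p, of l] det_transpose[OF B] unfolding B_def by simp
  also have "\<dots> = (\<Prod>j<d. 1 / (\<sigma> j)\<^sup>2)" unfolding Si_def det_diagm ..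
  finally show "det (Theta d (diagm d (\<lambda>j. (\<sigma> j)\<^sup>2)) (pmat d \<pi>) l) = (\<Prod>j<d. 1 / (\<sigma> j)\<^sup>2)"
    unfolding Th .
  define w where "w = B *\<^sub>v X"
  have w: "w \<in> carrier_vec d" unfolding w_def using B X by simp
  have e1: "(transpose_mat B * Si * B) *\<^sub>v X = (transpose_mat B * Si) *\<^sub>v w"
    unfolding w_def by (rule assoc_mult_mat_vec[of _ d d _ d]) (use B BT Si X in auto)
  have e2: "(transpose_mat B * Si) *\<^sub>v w = transpose_mat B *\<^sub>v (Si *\<^sub>v w)"
    by (rule assoc_mult_mat_vec[of _ d d _ d]) (use B BT Si w in auto)
  have "X \<bullet> (transpose_mat B * Si * B *\<^sub>v X) = X \<bullet> (transpose_mat B *\<^sub>v (Si *\<^sub>v w))"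
    unfolding e1 e2 ..
  also have "\<dots> = (transpose_mat B *\<^sub>v (Si *\<^sub>v w)) \<bullet> X"
    using BT Si w X by (intro comm_scalar_prod[of _ d]) auto
  also have "\<dots> = (Si *\<^sub>v w) \<bullet> w"
    unfolding w_def using B X Si w by (intro transpose_vec_mult_scalar) auto
  also have "\<dots> = w \<bullet> (Si *\<^sub>v w)"
    using Si w by (intro comm_scalar_prod[of _ d]) auto
  also have "\<dots> = (\<Sum>j<d. 1 / (\<sigma> j)\<^sup>2 * (w $ j)\<^sup>2)"
    unfolding Si_def using w by (rule diagm_quad)
  also have "\<dots> = (\<Sum>j<d. (X $ j - (\<Sum>m<iperm \<pi> j. l (iperm \<pi> j, m) * X $ (\<pi> m)))\<^sup>2 / (\<sigma> j)\<^sup>2)"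
  proof (rule sum.cong[OF refl])
    fix j assume j: "j \<in> {..<d}"
    have ij: "iperm \<pi> j < d" using j permutes_in_image[OF permutes_inv[OF p]] by simp
    have PT: "transpose_mat (pmat d \<pi>) *\<^sub>v X \<in> carrier_vec d" using X by (intro mult_mat_vec_carrier[of _ d d]) simp_all
    have LP: "lower_mat d l *\<^sub>v (transpose_mat (pmat d \<pi>) *\<^sub>v X) \<in> carrier_vec d" by (rule mult_mat_vec_carrier[OF lower_mat_carrier PT])
    define M where "M = pmat d \<pi> * lower_mat d l * transpose_mat (pmat d \<pi>)"
    have M: "M \<in> carrier_mat d d" unfolding M_def by simp
    have weq: "w = 1\<^sub>m d *\<^sub>v X - M *\<^sub>v X"
      unfolding w_def B_def M_def[symmetric] by (rule minus_mult_distrib_mat_vec[OF one_carrier_mat M X])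
    then have wj: "w $ j = X $ j - (M *\<^sub>v X) $ j"
    proof -
      have "M *\<^sub>v X \<in> carrier_vec d" using M X by (rule mult_mat_vec_carrier)
      then have dm: "dim_vec (M *\<^sub>v X) = d" unfolding carrier_vec_def by blast
      have "w $ j = (1\<^sub>m d *\<^sub>v X) $ j - (M *\<^sub>v X) $ j"
        unfolding weq by (rule index_minus_vec(1)) (use dm j in simp)
      then show ?thesis unfolding one_mult_mat_vec[OF X] .
    qed
    have "M *\<^sub>v X = (pmat d \<pi> * lower_mat d l) *\<^sub>v (transpose_mat (pmat d \<pi>) *\<^sub>v X)"
      unfolding M_def by (rule assoc_mult_mat_vec[OF PL_carrier _ X]) simp
    also have "\<dots> = pmat d \<pi> *\<^sub>v (lower_mat d l *\<^sub>v (transpose_mat (pmat d \<pi>) *\<^sub>v X))"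
      by (rule assoc_mult_mat_vec[OF pmat_carrier lower_mat_carrier PT])
    finally have "w $ j = X $ j - (pmat d \<pi> *\<^sub>v (lower_mat d l *\<^sub>v (transpose_mat (pmat d \<pi>) *\<^sub>v X))) $ j"
      using wj by simp
    also have "\<dots> = X $ j - (\<Sum>m<iperm \<pi> j. l (iperm \<pi> j, m) * X $ (\<pi> m))"
    proof -
      have jd: "j < d" using j by simp
      have "(pmat d \<pi> *\<^sub>v (lower_mat d l *\<^sub>v (transpose_mat (pmat d \<pi>) *\<^sub>v X))) $ j
          = (lower_mat d l *\<^sub>v (transpose_mat (pmat d \<pi>) *\<^sub>v X)) $ iperm \<pi> j"
        by (rule pmat_mult_vec[OF p LP jd])
      also have "\<dots> = (\<Sum>m<iperm \<pi> j. l (iperm \<pi> j, m) * (transpose_mat (pmat d \<pi>) *\<^sub>v X) $ m)"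
        by (rule lower_mat_vec[OF PT ij])
      also have "\<dots> = (\<Sum>m<iperm \<pi> j. l (iperm \<pi> j, m) * X $ (\<pi> m))"
      proof (rule sum.cong[OF refl])
        fix m assume "m \<in> {..<iperm \<pi> j}"
        then have md: "m < d" using ij by simp
        show "l (iperm \<pi> j, m) * (transpose_mat (pmat d \<pi>) *\<^sub>v X) $ m = l (iperm \<pi> j, m) * X $ (\<pi> m)"
          unfolding pmatT_mult_vec[OF p X md] ..
      qed
      finally show ?thesis by simp
    qed
    finally show "1 / (\<sigma> j)\<^sup>2 * (w $ j)\<^sup>2 = (X $ j - (\<Sum>m<iperm \<pi> j. l (iperm \<pi> j, m) * X $ (\<pi> m)))\<^sup>2 / (\<sigma> j)\<^sup>2"
      by simp
  qed
  finally show "X \<bullet> (Theta d (diagm d (\<lambda>j. (\<sigma> j)\<^sup>2)) (pmat d \<pi>) l *\<^sub>v X)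
         = (\<Sum>j<d. (X $ j - (\<Sum>m<iperm \<pi> j. l (iperm \<pi> j, m) * X $ (\<pi> m)))\<^sup>2 / (\<sigma> j)\<^sup>2)"
    unfolding Th .
qed


lemma nd_factor:
  assumes s: "s > 0"
  shows "(2 * pi) powr (-1/2) * (s\<^sup>2) powr (-1/2) * exp (- (1/2) * ((x - m)\<^sup>2 / s\<^sup>2))
       = normal_density m s x"
proof -
  have "(2 * pi) powr (-1/2) * (s\<^sup>2) powr (-1/2) = (2 * pi * s\<^sup>2) powr (-1/2)"
    by (rule powr_mult[symmetric])
  also have "(-1/2::real) = - (1/2)" by simp
  also have "(2 * pi * s\<^sup>2) powr (- (1/2)) = 1 / (2 * pi * s\<^sup>2) powr (1/2)"
    by (rule powr_minus_divide)
  also have "(2 * pi * s\<^sup>2) powr (1/2) = sqrt (2 * pi * s\<^sup>2)"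
    by (rule powr_half_sqrt) simp
  finally have 1: "(2 * pi) powr (-1/2) * (s\<^sup>2) powr (-1/2) = 1 / sqrt (2 * pi * s\<^sup>2)"
    unfolding minus_divide_left .
  have 2: "- (1/2) * ((x - m)\<^sup>2 / s\<^sup>2) = - (x - m)\<^sup>2 / (2 * s\<^sup>2)" by simp
  show ?thesis unfolding normal_density_def 1 2 ..
qed

lemma gauss_eq:
  fixes d :: nat and \<sigma> :: "nat \<Rightarrow> real" and q :: "nat \<Rightarrow> real" and C :: "real mat"
  assumes sp: "\<forall>j<d. \<sigma> j > 0" and X: "X \<in> carrier_vec d"
    and C: "C \<in> carrier_mat d d" and dC: "det C = (\<Prod>j<d. 1 / (\<sigma> j)\<^sup>2)"
    and quad: "X \<bullet> (C *\<^sub>v X) = (\<Sum>j<d. (X $ j - \<mu> j)\<^sup>2 / (\<sigma> j)\<^sup>2)"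
  shows "gauss_density d (minv C) X = (\<Prod>j<d. normal_density (\<mu> j) (\<sigma> j) (X $ j))"
proof -
  have nz: "\<forall>a\<in>{..<d}. \<sigma> a \<noteq> 0" using sp by force
  have dC0: "det C \<noteq> 0" unfolding dC using nz by (simp add: prod_zero_iff)
  have mm: "minv (minv C) = C" by (rule minv_minv[OF C dC0])
  have dm: "det (minv C) = (\<Prod>j<d. (\<sigma> j)\<^sup>2)"
    unfolding det_minv[OF C dC0] dC by (simp only: prod_dividef prod.neutral_const) simp
  have a: "(2 * pi) powr (- real d / 2) = (\<Prod>j<d. (2 * pi) powr (-1/2))"
  proof -
    have "(\<Prod>j<d. (2 * pi) powr (-1/2)) = ((2 * pi) powr (-1/2)) ^ d" by simp
    also have "\<dots> = (2 * pi) powr (real d * (-1/2))" by (rule powr_power) simp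
    finally show ?thesis by simp
  qed
  have b: "(\<Prod>j<d. (\<sigma> j)\<^sup>2) powr (-1/2) = (\<Prod>j<d. ((\<sigma> j)\<^sup>2) powr (-1/2))"
    by (rule prod_powr_distrib)
  have c: "exp (- (1 / 2) * (\<Sum>j<d. (X $ j - \<mu> j)\<^sup>2 / (\<sigma> j)\<^sup>2))
       = (\<Prod>j<d. exp (- (1/2) * ((X $ j - \<mu> j)\<^sup>2 / (\<sigma> j)\<^sup>2)))"
    by (simp only: sum_distrib_left exp_sum[OF finite_lessThan])
  have "gauss_density d (minv C) X = (\<Prod>j<d. (2 * pi) powr (-1/2) * ((\<sigma> j)\<^sup>2) powr (-1/2)
          * exp (- (1/2) * ((X $ j - \<mu> j)\<^sup>2 / (\<sigma> j)\<^sup>2)))"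
    unfolding gauss_density_def mm dm quad a b c prod.distrib[symmetric] ..
  also have "\<dots> = (\<Prod>j<d. normal_density (\<mu> j) (\<sigma> j) (X $ j))"
    using sp by (intro prod.cong refl nd_factor) auto
  finally show ?thesis .
qed

lemma expo_id:
  fixes y a t V W :: real
  assumes V: "V > 0" and W: "W > 0"
  shows "- (y - a * t)\<^sup>2 / (2 * V) + - t\<^sup>2 / (2 * W)
       = - y\<^sup>2 / (2 * (V + a\<^sup>2 * W)) + - (t - a * W * y / (V + a\<^sup>2 * W))\<^sup>2 / (2 * (V * W / (V + a\<^sup>2 * W)))"
proof -
  define S where "S = V + a\<^sup>2 * W"
  have S: "S > 0" using V W by (simp add: add_pos_nonneg S_def)
  have poly: "W * S * (y - a * t)\<^sup>2 + V * S * t\<^sup>2 = V * W * y\<^sup>2 + (S * t - a * W * y)\<^sup>2"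
    unfolding S_def by (simp add: power2_eq_square algebra_simps)
  have l: "- (y - a * t)\<^sup>2 / (2 * V) + - t\<^sup>2 / (2 * W) = - (W * S * (y - a * t)\<^sup>2 + V * S * t\<^sup>2) / (2 * V * W * S)"
    using V W S by (simp add: field_simps)
  have e: "t - a * W * y / S = (S * t - a * W * y) / S" using S by (simp add: field_simps)
  have r: "- y\<^sup>2 / (2 * S) + - (t - a * W * y / S)\<^sup>2 / (2 * (V * W / S))
        = - (V * W * y\<^sup>2 + (S * t - a * W * y)\<^sup>2) / (2 * V * W * S)"
    unfolding e using V W S by (simp add: field_simps power2_eq_square)
  show ?thesis unfolding S_def[symmetric] l r poly ..
qed

lemma nd_prod_id:
  fixes s \<nu> :: real
  assumes s: "s > 0" and \<nu>: "\<nu> > 0"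
  shows "normal_density (c + a * t) s x * normal_density 0 \<nu> t
       = normal_density c (sqrt (s\<^sup>2 + a\<^sup>2 * \<nu>\<^sup>2)) x
         * normal_density (a * \<nu>\<^sup>2 * (x - c) / (s\<^sup>2 + a\<^sup>2 * \<nu>\<^sup>2)) (sqrt (s\<^sup>2 * \<nu>\<^sup>2 / (s\<^sup>2 + a\<^sup>2 * \<nu>\<^sup>2))) t"
proof -
  define V W where "V = s\<^sup>2" and "W = \<nu>\<^sup>2"
  have V: "V > 0" and W: "W > 0" using s \<nu> by (simp_all add: V_def W_def)
  have S: "V + a\<^sup>2 * W > 0" using V W by (simp add: add_pos_nonneg)
  have sq1: "(sqrt (V + a\<^sup>2 * W))\<^sup>2 = V + a\<^sup>2 * W" using S by simp
  have sq2: "(sqrt (V * W / (V + a\<^sup>2 * W)))\<^sup>2 = V * W / (V + a\<^sup>2 * W)" using S V W by simp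
  have pre: "1 / sqrt (2 * pi * V) * (1 / sqrt (2 * pi * W))
     = 1 / sqrt (2 * pi * (V + a\<^sup>2 * W)) * (1 / sqrt (2 * pi * (V * W / (V + a\<^sup>2 * W))))"
  proof -
    have "sqrt (2 * pi * V) * sqrt (2 * pi * W) = sqrt ((2 * pi * V) * (2 * pi * W))"
      by (rule real_sqrt_mult[symmetric])
    also have "(2 * pi * V) * (2 * pi * W) = (2 * pi * (V + a\<^sup>2 * W)) * (2 * pi * (V * W / (V + a\<^sup>2 * W)))"
      using S by (simp add: field_simps)
    also have "sqrt \<dots> = sqrt (2 * pi * (V + a\<^sup>2 * W)) * sqrt (2 * pi * (V * W / (V + a\<^sup>2 * W)))"
      by (rule real_sqrt_mult)
    finally have p: "sqrt (2 * pi * V) * sqrt (2 * pi * W) = sqrt (2 * pi * (V + a\<^sup>2 * W)) * sqrt (2 * pi * (V * W / (V + a\<^sup>2 * W)))" .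
    show ?thesis unfolding times_divide_times_eq p ..
  qed
  have "normal_density (c + a * t) s x * normal_density 0 \<nu> t
      = (1 / sqrt (2 * pi * V) * (1 / sqrt (2 * pi * W))) * exp (- ((x - c) - a * t)\<^sup>2 / (2 * V) + - t\<^sup>2 / (2 * W))"
  proof -
    have n1: "normal_density (c + a * t) s x = 1 / sqrt (2 * pi * V) * exp (- ((x - c) - a * t)\<^sup>2 / (2 * V))"
      unfolding normal_density_def V_def by (simp add: algebra_simps)
    have n2: "normal_density 0 \<nu> t = 1 / sqrt (2 * pi * W) * exp (- t\<^sup>2 / (2 * W))"
      unfolding normal_density_def W_def by simp
    show ?thesis unfolding n1 n2 exp_add by (simp only: mult_ac)
  qed
  also have "\<dots> = (1 / sqrt (2 * pi * (V + a\<^sup>2 * W)) * (1 / sqrt (2 * pi * (V * W / (V + a\<^sup>2 * W)))))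
      * exp (- (x - c)\<^sup>2 / (2 * (V + a\<^sup>2 * W)) + - (t - a * W * (x - c) / (V + a\<^sup>2 * W))\<^sup>2 / (2 * (V * W / (V + a\<^sup>2 * W))))"
    unfolding pre expo_id[OF V W] ..
  also have "\<dots> = normal_density c (sqrt (V + a\<^sup>2 * W)) x
         * normal_density (a * W * (x - c) / (V + a\<^sup>2 * W)) (sqrt (V * W / (V + a\<^sup>2 * W))) t"
  proof -
    have m1: "normal_density c (sqrt (V + a\<^sup>2 * W)) x = 1 / sqrt (2 * pi * (V + a\<^sup>2 * W)) * exp (- (x - c)\<^sup>2 / (2 * (V + a\<^sup>2 * W)))"
      unfolding normal_density_def sq1 ..
    have m2: "normal_density (a * W * (x - c) / (V + a\<^sup>2 * W)) (sqrt (V * W / (V + a\<^sup>2 * W))) t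
       = 1 / sqrt (2 * pi * (V * W / (V + a\<^sup>2 * W))) * exp (- (t - a * W * (x - c) / (V + a\<^sup>2 * W))\<^sup>2 / (2 * (V * W / (V + a\<^sup>2 * W))))"
      unfolding normal_density_def sq2 ..
    show ?thesis unfolding m1 m2 exp_add by (simp only: mult_ac)
  qed
  finally show ?thesis unfolding V_def W_def .
qed

lemma conv1:
  fixes s \<nu> :: real
  assumes s: "s > 0" and \<nu>: "\<nu> > 0"
  shows "(\<integral>\<^sup>+t. ennreal (normal_density (c + a * t) s x * normal_density 0 \<nu> t) \<partial>lborel)
       = ennreal (normal_density c (sqrt (s\<^sup>2 + a\<^sup>2 * \<nu>\<^sup>2)) x)"
proof -
  let ?K = "normal_density c (sqrt (s\<^sup>2 + a\<^sup>2 * \<nu>\<^sup>2)) x"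
  let ?m = "a * \<nu>\<^sup>2 * (x - c) / (s\<^sup>2 + a\<^sup>2 * \<nu>\<^sup>2)"
  let ?t = "sqrt (s\<^sup>2 * \<nu>\<^sup>2 / (s\<^sup>2 + a\<^sup>2 * \<nu>\<^sup>2))"
  have tpos: "?t > 0" using s \<nu> by (simp add: add_pos_nonneg)
  have one: "(\<integral>\<^sup>+t. ennreal (normal_density ?m ?t t) \<partial>lborel) = 1"
    using tpos by (subst nn_integral_eq_integral) (auto intro!: integrable_normal_density integral_normal_density)
  have "(\<integral>\<^sup>+t. ennreal (normal_density (c + a * t) s x * normal_density 0 \<nu> t) \<partial>lborel)
      = (\<integral>\<^sup>+t. ennreal ?K * ennreal (normal_density ?m ?t t) \<partial>lborel)"
    by (intro nn_integral_cong) (simp add: nd_prod_id[OF s \<nu>] ennreal_mult')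
  also have "\<dots> = ennreal ?K * (\<integral>\<^sup>+t. ennreal (normal_density ?m ?t t) \<partial>lborel)"
    by (rule nn_integral_cmult) simp
  also have "\<dots> = ennreal ?K"
    unfolding one by simp
  finally show ?thesis .
qed

lemma psf: "product_sigma_finite (\<lambda>_::'i. lborel)"
  unfolding product_sigma_finite_def by (auto intro: sigma_finite_lborel lborel.sigma_finite_measure_axioms)

definition Rset :: "nat \<Rightarrow> nat \<Rightarrow> (nat \<times> nat) set" where
  "Rset r q = (\<lambda>m. (r,m)) ` {..<q}"

lemma Rset_Suc: "Rset r (Suc q) = insert (r,q) (Rset r q)"
  by (auto simp: Rset_def lessThan_Suc)

lemma Rset_notin: "(r,q) \<notin> Rset r q" by (auto simp: Rset_def)
lemma finite_Rset[simp]: "finite (Rset r q)" by (simp add: Rset_def)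
lemma Rset_mem[simp]: "((r',m) \<in> Rset r q) = (r' = r \<and> m < q)" by (auto simp: Rset_def)

lemma comp_meas: "i \<in> I \<Longrightarrow> (\<lambda>y. y i) \<in> borel_measurable (PiM I (\<lambda>_. lborel))"
  using measurable_component_singleton[of i I "\<lambda>_. lborel"] by (simp add: measurable_lborel1)

lemma nd_meas: "f \<in> borel_measurable M \<Longrightarrow> (\<lambda>y. normal_density (f y) s x) \<in> borel_measurable M"
  unfolding normal_density_def by measurable simp_all

lemma nd_meas2: "f \<in> borel_measurable M \<Longrightarrow> (\<lambda>y. normal_density m s (f y)) \<in> borel_measurable M"
  unfolding normal_density_def by measurable simp_all

lemma ennreal_meas: "f \<in> borel_measurable M \<Longrightarrow> (\<lambda>y. ennreal (f y)) \<in> borel_measurable M"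
  by measurable

lemmas meas_rules = ennreal_meas borel_measurable_times borel_measurable_add borel_measurable_sum
  borel_measurable_prod nd_meas nd_meas2 comp_meas borel_measurable_const

lemma meas_row:
  "(\<lambda>y. ennreal (normal_density (c + (\<Sum>m<q. y (r,m) * a m)) s x * (\<Prod>m<q. normal_density 0 \<nu> (y (r,m)))))
     \<in> borel_measurable (PiM I (\<lambda>_. lborel))" if "Rset r q \<subseteq> I"
  using that by (auto intro!: meas_rules)

lemma nn_integral_PiM_empty:
  "(\<integral>\<^sup>+y. ennreal c \<partial>PiM {} (\<lambda>_::'i. lborel)) = ennreal c"
  by (simp add: nn_integral_const space_PiM_empty)

lemma meas_conv: "(\<lambda>t. ennreal (normal_density (C + b * t) s x * normal_density 0 \<nu> t)) \<in> borel_measurable lborel"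
  unfolding normal_density_def by measurable

lemma row_int:
  assumes \<nu>: "\<nu> > 0"
  shows "s > 0 \<Longrightarrow> (\<integral>\<^sup>+y. ennreal (normal_density (c + (\<Sum>m<q. y (r,m) * a m)) s x * (\<Prod>m<q. normal_density 0 \<nu> (y (r,m))))
          \<partial>PiM (Rset r q) (\<lambda>_. lborel))
       = ennreal (normal_density c (sqrt (s\<^sup>2 + \<nu>\<^sup>2 * (\<Sum>m<q. (a m)\<^sup>2))) x)"
proof (induction q arbitrary: s)
  case 0
  have "Rset r 0 = {}" by (simp add: Rset_def)
  then show ?case using 0 by (simp add: space_PiM_empty real_sqrt_abs)
next
  case (Suc q)
  define s' where "s' = sqrt (s\<^sup>2 + (a q)\<^sup>2 * \<nu>\<^sup>2)"
  have s': "s' > 0" using Suc.prems unfolding s'_def by (simp add: add_pos_nonneg)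
  let ?f = "\<lambda>y. ennreal (normal_density (c + (\<Sum>m<Suc q. y (r,m) * a m)) s x * (\<Prod>m<Suc q. normal_density 0 \<nu> (y (r,m))))"
  have meas: "?f \<in> borel_measurable (PiM (insert (r,q) (Rset r q)) (\<lambda>_. lborel))"
    by (rule meas_row) (simp add: Rset_Suc[symmetric])
  have "(\<integral>\<^sup>+y. ?f y \<partial>PiM (Rset r (Suc q)) (\<lambda>_. lborel))
      = (\<integral>\<^sup>+y. \<integral>\<^sup>+t. ?f (y((r,q) := t)) \<partial>lborel \<partial>PiM (Rset r q) (\<lambda>_. lborel))"
    unfolding Rset_Suc
    by (rule product_sigma_finite.product_nn_integral_insert[OF psf finite_Rset Rset_notin meas])
  also have "\<dots> = (\<integral>\<^sup>+y. ennreal (normal_density (c + (\<Sum>m<q. y (r,m) * a m)) s' x * (\<Prod>m<q. normal_density 0 \<nu> (y (r,m))))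
          \<partial>PiM (Rset r q) (\<lambda>_. lborel))"
  proof (rule nn_integral_cong)
    fix y :: "nat \<times> nat \<Rightarrow> real"
    let ?C = "c + (\<Sum>m<q. y (r,m) * a m)"
    let ?P = "\<Prod>m<q. normal_density 0 \<nu> (y (r,m))"
    have P0: "?P \<ge> 0" by (simp add: prod_nonneg)
    have "\<And>t. ?f (y((r,q) := t)) = ennreal ?P * ennreal (normal_density (?C + a q * t) s x * normal_density 0 \<nu> t)"
    proof -
      fix t
      have e1: "(\<Sum>m<Suc q. (y((r,q) := t)) (r,m) * a m) = ?C - c + a q * t"
        by (simp add: algebra_simps)
      have e2: "(\<Prod>m<Suc q. normal_density 0 \<nu> ((y((r,q) := t)) (r,m))) = ?P * normal_density 0 \<nu> t"
        by simp
      show "?f (y((r,q) := t)) = ennreal ?P * ennreal (normal_density (?C + a q * t) s x * normal_density 0 \<nu> t)"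
        unfolding e1 e2 using P0 by (simp add: ennreal_mult'[symmetric] algebra_simps)
    qed
    then have "(\<integral>\<^sup>+t. ?f (y((r,q) := t)) \<partial>lborel)
        = ennreal ?P * (\<integral>\<^sup>+t. ennreal (normal_density (?C + a q * t) s x * normal_density 0 \<nu> t) \<partial>lborel)"
      by (simp add: nn_integral_cmult[OF meas_conv])
    also have "\<dots> = ennreal ?P * ennreal (normal_density ?C s' x)"
      unfolding conv1[OF Suc.prems \<nu>] s'_def by (simp add: mult.commute)
    also have "\<dots> = ennreal (normal_density ?C s' x * ?P)"
      using P0 by (simp add: ennreal_mult'[symmetric] mult.commute)
    finally show "(\<integral>\<^sup>+t. ?f (y((r,q) := t)) \<partial>lborel) = ennreal (normal_density ?C s' x * ?P)" .
  qed
  also have "\<dots> = ennreal (normal_density c (sqrt (s'\<^sup>2 + \<nu>\<^sup>2 * (\<Sum>m<q. (a m)\<^sup>2))) x)"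
    by (rule Suc.IH[OF s'])
  also have "s'\<^sup>2 + \<nu>\<^sup>2 * (\<Sum>m<q. (a m)\<^sup>2) = s\<^sup>2 + \<nu>\<^sup>2 * (\<Sum>m<Suc q. (a m)\<^sup>2)"
    unfolding s'_def by (simp add: add_pos_nonneg algebra_simps)
  finally show ?case .
qed

definition Fn :: "nat \<Rightarrow> (nat \<Rightarrow> real) \<Rightarrow> (nat \<Rightarrow> real) \<Rightarrow> real \<Rightarrow> (nat \<times> nat \<Rightarrow> real) \<Rightarrow> real" where
  "Fn n Y s \<nu> l = (\<Prod>k<n. normal_density (\<Sum>m<k. l (k,m) * Y m) (s k) (Y k)) * (\<Prod>p\<in>lower_idx n. normal_density 0 \<nu> (l p))"

lemma lower_idx_Suc: "lower_idx (Suc n) = lower_idx n \<union> Rset n n"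
  by (auto simp: lower_idx_def Rset_def less_Suc_eq)

lemma lower_idx_disj: "lower_idx n \<inter> Rset n n = {}"
  by (auto simp: lower_idx_def Rset_def)

lemma finite_lower_idx[simp]: "finite (lower_idx n)"
proof -
  have "lower_idx n \<subseteq> {..<n} \<times> {..<n}" by (auto simp: lower_idx_def)
  then show ?thesis by (rule finite_subset) simp
qed

lemma lower_idx_mem[simp]: "((k,m) \<in> lower_idx n) = (m < k \<and> k < n)"
  by (simp add: lower_idx_def)

lemma meas_F:
  assumes "lower_idx n \<subseteq> I"
  shows "(\<lambda>l. ennreal (Fn n Y s \<nu> l)) \<in> borel_measurable (PiM I (\<lambda>_. lborel))"
  unfolding Fn_def using assms by (auto intro!: meas_rules)

lemma prod_Rset: "(\<Prod>p\<in>Rset r q. g p) = (\<Prod>m<q. g (r,m))"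
  unfolding Rset_def by (subst prod.reindex) (auto simp: inj_on_def)

lemma block_int:
  assumes \<nu>: "\<nu> > 0" and s: "\<forall>k. s k > 0"
  shows "(\<integral>\<^sup>+l. ennreal (Fn n Y s \<nu> l) \<partial>PiM (lower_idx n) (\<lambda>_. lborel))
       = ennreal (\<Prod>k<n. normal_density 0 (sqrt ((s k)\<^sup>2 + \<nu>\<^sup>2 * (\<Sum>m<k. (Y m)\<^sup>2))) (Y k))"
proof (induction n)
  case 0
  have "lower_idx 0 = {}" by (simp add: lower_idx_def)
  then show ?case by (simp add: Fn_def space_PiM_empty)
next
  case (Suc n)
  let ?G = "\<lambda>y. normal_density (0 + (\<Sum>m<n. y (n,m) * Y m)) (s n) (Y n) * (\<Prod>m<n. normal_density 0 \<nu> (y (n,m)))"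
  let ?R = "normal_density 0 (sqrt ((s n)\<^sup>2 + \<nu>\<^sup>2 * (\<Sum>m<n. (Y m)\<^sup>2))) (Y n)"
  have measS: "(\<lambda>l. ennreal (Fn (Suc n) Y s \<nu> l)) \<in> borel_measurable (PiM (lower_idx n \<union> Rset n n) (\<lambda>_. lborel))"
    by (rule meas_F) (simp add: lower_idx_Suc)
  have measG: "(\<lambda>y. ennreal (?G y)) \<in> borel_measurable (PiM (Rset n n) (\<lambda>_. lborel))"
    by (rule meas_row) simp
  have measF: "(\<lambda>l. ennreal (Fn n Y s \<nu> l)) \<in> borel_measurable (PiM (lower_idx n) (\<lambda>_. lborel))"
    by (rule meas_F) simp
  have Fnn: "Fn n Y s \<nu> x \<ge> 0" for x by (simp add: Fn_def prod_nonneg)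
  have Gnn: "?G y \<ge> 0" for y by (simp add: prod_nonneg)
  have split: "Fn (Suc n) Y s \<nu> (merge (lower_idx n) (Rset n n) (x, y)) = Fn n Y s \<nu> x * ?G y" for x y
  proof -
    let ?z = "merge (lower_idx n) (Rset n n) (x, y)"
    have zx: "?z p = x p" if "p \<in> lower_idx n" for p using that by (simp add: merge_def)
    have zy: "?z p = y p" if "p \<in> Rset n n" for p using that lower_idx_disj by (auto simp: merge_def)
    have a: "(\<Prod>k<Suc n. normal_density (\<Sum>m<k. ?z (k,m) * Y m) (s k) (Y k))
        = (\<Prod>k<n. normal_density (\<Sum>m<k. x (k,m) * Y m) (s k) (Y k)) * normal_density (\<Sum>m<n. y (n,m) * Y m) (s n) (Y n)"
      by (simp add: zx zy)
    have b: "(\<Prod>p\<in>lower_idx (Suc n). normal_density 0 \<nu> (?z p))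
        = (\<Prod>p\<in>lower_idx n. normal_density 0 \<nu> (x p)) * (\<Prod>m<n. normal_density 0 \<nu> (y (n,m)))"
      unfolding lower_idx_Suc
      by (subst prod.union_disjoint) (auto simp: lower_idx_disj zx zy prod_Rset intro!: prod.cong)
    show ?thesis unfolding Fn_def a b by (simp add: mult_ac)
  qed
  have "(\<integral>\<^sup>+l. ennreal (Fn (Suc n) Y s \<nu> l) \<partial>PiM (lower_idx (Suc n)) (\<lambda>_. lborel))
      = (\<integral>\<^sup>+x. \<integral>\<^sup>+y. ennreal (Fn (Suc n) Y s \<nu> (merge (lower_idx n) (Rset n n) (x, y)))
            \<partial>PiM (Rset n n) (\<lambda>_. lborel) \<partial>PiM (lower_idx n) (\<lambda>_. lborel))"
    unfolding lower_idx_Suc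
    by (rule product_sigma_finite.product_nn_integral_fold[OF psf lower_idx_disj finite_lower_idx finite_Rset measS])
  also have "\<dots> = (\<integral>\<^sup>+x. ennreal (Fn n Y s \<nu> x) * ennreal ?R \<partial>PiM (lower_idx n) (\<lambda>_. lborel))"
  proof (rule nn_integral_cong)
    fix x
    have "(\<integral>\<^sup>+y. ennreal (Fn (Suc n) Y s \<nu> (merge (lower_idx n) (Rset n n) (x, y))) \<partial>PiM (Rset n n) (\<lambda>_. lborel))
        = (\<integral>\<^sup>+y. ennreal (Fn n Y s \<nu> x) * ennreal (?G y) \<partial>PiM (Rset n n) (\<lambda>_. lborel))"
      unfolding split using Fnn Gnn by (simp add: ennreal_mult')
    also have "\<dots> = ennreal (Fn n Y s \<nu> x) * (\<integral>\<^sup>+y. ennreal (?G y) \<partial>PiM (Rset n n) (\<lambda>_. lborel))"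
      by (rule nn_integral_cmult[OF measG])
    also have "(\<integral>\<^sup>+y. ennreal (?G y) \<partial>PiM (Rset n n) (\<lambda>_. lborel)) = ennreal ?R"
      using row_int[OF \<nu> s[rule_format, of n], where c=0 and q=n and r=n and a=Y and x="Y n"] by simp
    finally show "(\<integral>\<^sup>+y. ennreal (Fn (Suc n) Y s \<nu> (merge (lower_idx n) (Rset n n) (x, y))) \<partial>PiM (Rset n n) (\<lambda>_. lborel))
        = ennreal (Fn n Y s \<nu> x) * ennreal ?R" .
  qed
  also have "\<dots> = (\<integral>\<^sup>+x. ennreal (Fn n Y s \<nu> x) \<partial>PiM (lower_idx n) (\<lambda>_. lborel)) * ennreal ?R"
    by (rule nn_integral_multc[OF measF])
  also have "\<dots> = ennreal (\<Prod>k<Suc n. normal_density 0 (sqrt ((s k)\<^sup>2 + \<nu>\<^sup>2 * (\<Sum>m<k. (Y m)\<^sup>2))) (Y k))"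
    unfolding Suc.IH by (simp add: ennreal_mult'[symmetric] prod_nonneg)
  finally show ?case .
qed

lemma PLPT_vec:
  assumes p: "\<pi> permutes {..<d}" and v: "v \<in> carrier_vec d" and j: "j < d"
  shows "((pmat d \<pi> * lower_mat d l * transpose_mat (pmat d \<pi>)) *\<^sub>v v) $ j
       = (\<Sum>m<iperm \<pi> j. l (iperm \<pi> j, m) * v $ (\<pi> m))"
proof -
  have ij: "iperm \<pi> j < d" using j permutes_in_image[OF permutes_inv[OF p]] by simp
  have PT: "transpose_mat (pmat d \<pi>) *\<^sub>v v \<in> carrier_vec d" using v by (intro mult_mat_vec_carrier[of _ d d]) simp_all
  have LP: "lower_mat d l *\<^sub>v (transpose_mat (pmat d \<pi>) *\<^sub>v v) \<in> carrier_vec d"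
    by (rule mult_mat_vec_carrier[OF lower_mat_carrier PT])
  have "(pmat d \<pi> * lower_mat d l * transpose_mat (pmat d \<pi>)) *\<^sub>v v = (pmat d \<pi> * lower_mat d l) *\<^sub>v (transpose_mat (pmat d \<pi>) *\<^sub>v v)"
    by (rule assoc_mult_mat_vec[OF PL_carrier _ v]) simp
  also have "\<dots> = pmat d \<pi> *\<^sub>v (lower_mat d l *\<^sub>v (transpose_mat (pmat d \<pi>) *\<^sub>v v))"
    by (rule assoc_mult_mat_vec[OF pmat_carrier lower_mat_carrier PT])
  finally have eq: "(pmat d \<pi> * lower_mat d l * transpose_mat (pmat d \<pi>)) *\<^sub>v v = pmat d \<pi> *\<^sub>v (lower_mat d l *\<^sub>v (transpose_mat (pmat d \<pi>) *\<^sub>v v))" .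
  have "(pmat d \<pi> *\<^sub>v (lower_mat d l *\<^sub>v (transpose_mat (pmat d \<pi>) *\<^sub>v v))) $ j
      = (lower_mat d l *\<^sub>v (transpose_mat (pmat d \<pi>) *\<^sub>v v)) $ iperm \<pi> j"
    by (rule pmat_mult_vec[OF p LP j])
  also have "\<dots> = (\<Sum>m<iperm \<pi> j. l (iperm \<pi> j, m) * (transpose_mat (pmat d \<pi>) *\<^sub>v v) $ m)"
    by (rule lower_mat_vec[OF PT ij])
  also have "\<dots> = (\<Sum>m<iperm \<pi> j. l (iperm \<pi> j, m) * v $ (\<pi> m))"
  proof (rule sum.cong[OF refl])
    fix m assume "m \<in> {..<iperm \<pi> j}"
    then have md: "m < d" using ij by simp
    show "l (iperm \<pi> j, m) * (transpose_mat (pmat d \<pi>) *\<^sub>v v) $ m = l (iperm \<pi> j, m) * v $ (\<pi> m)"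
      unfolding pmatT_mult_vec[OF p v md] ..
  qed
  finally show ?thesis unfolding eq .
qed

lemma Gmat_lower: "Gmat d = lower_mat d (\<lambda>_. 1)"
  by (simp add: Gmat_def lower_mat_def)

lemma D_entry:
  assumes p: "\<pi> permutes {..<d}" and X: "X \<in> carrier_vec d" and j: "j < d"
  shows "Dmat d (pmat d \<pi>) X $$ (j,j) = (\<Sum>m<iperm \<pi> j. (X $ (\<pi> m))\<^sup>2)"
proof -
  have v: "vec d (\<lambda>k. (X $ k)\<^sup>2) \<in> carrier_vec d" by simp
  have "Dmat d (pmat d \<pi>) X $$ (j,j) = ((pmat d \<pi> * lower_mat d (\<lambda>_. 1) * transpose_mat (pmat d \<pi>)) *\<^sub>v vec d (\<lambda>k. (X $ k)\<^sup>2)) $ j"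
    unfolding Dmat_def Gmat_lower using j by simp
  also have "\<dots> = (\<Sum>m<iperm \<pi> j. 1 * vec d (\<lambda>k. (X $ k)\<^sup>2) $ (\<pi> m))"
    by (rule PLPT_vec[OF p v j])
  also have "\<dots> = (\<Sum>m<iperm \<pi> j. (X $ (\<pi> m))\<^sup>2)"
  proof (rule sum.cong[OF refl])
    fix m assume "m \<in> {..<iperm \<pi> j}"
    moreover have "iperm \<pi> j < d" using j permutes_in_image[OF permutes_inv[OF p]] by simp
    ultimately have "m < d" by simp
    then have "\<pi> m < d" using permutes_in_image[OF p] by simp
    then show "1 * vec d (\<lambda>k. (X $ k)\<^sup>2) $ (\<pi> m) = (X $ (\<pi> m))\<^sup>2" by simp
  qed
  finally show ?thesis .
qed

lemma skip_prod:
  assumes i: "i < d"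
  shows "(\<Prod>j<d - 1. f (if j < i then j else Suc j)) = (\<Prod>j\<in>{..<d} - {i}. (f j :: real))"
proof -
  let ?h = "\<lambda>j. if j < i then j else Suc j"
  have inj: "inj_on ?h {..<d - 1}" by (auto simp: inj_on_def split: if_splits)
  have img: "?h ` {..<d - 1} = {..<d} - {i}"
  proof
    show "?h ` {..<d - 1} \<subseteq> {..<d} - {i}" using i by auto
    show "{..<d} - {i} \<subseteq> ?h ` {..<d - 1}"
    proof
      fix j assume j: "j \<in> {..<d} - {i}"
      show "j \<in> ?h ` {..<d - 1}"
      proof (cases "j < i")
        case True then show ?thesis using j i by (intro image_eqI[of _ _ j]) auto
      next
        case False then have "j > i" using j by auto
        then show ?thesis using j by (intro image_eqI[of _ _ "j - 1"]) auto
      qed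
    qed
  qed
  show ?thesis using prod.reindex[OF inj, of f] img by simp
qed

lemma ln_nd0:
  assumes T: "T > 0"
  shows "ln (normal_density 0 (sqrt T) x) = - (1/2) * ln (2 * pi) - (1/2) * ln T - x\<^sup>2 / (2 * T)"
proof -
  have sq: "(sqrt T)\<^sup>2 = T" using T by simp
  have pos: "2 * pi * T > 0" using T by simp
  have "normal_density 0 (sqrt T) x = 1 / sqrt (2 * pi * T) * exp (- x\<^sup>2 / (2 * T))"
    unfolding normal_density_def sq by simp
  then have "ln (normal_density 0 (sqrt T) x) = ln (1 / sqrt (2 * pi * T) * exp (- x\<^sup>2 / (2 * T)))"
    by (simp only:)
  also have "\<dots> = ln (1 / sqrt (2 * pi * T)) + ln (exp (- x\<^sup>2 / (2 * T)))"
    by (subst ln_mult) (use pos in auto)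
  also have "ln (exp (- x\<^sup>2 / (2 * T))) = - x\<^sup>2 / (2 * T)" by simp
  also have "ln (1 / sqrt (2 * pi * T)) = - (ln (2 * pi * T) / 2)"
    using pos by (simp add: ln_div ln_sqrt)
  also have "ln (2 * pi * T) = ln (2 * pi) + ln T"
    using T by (simp add: ln_mult)
  finally have h: "ln (normal_density 0 (sqrt T) x) = - ((ln (2 * pi) + ln T) / 2) + - x\<^sup>2 / (2 * T)" .
  then show ?thesis by (simp add: field_simps)
qed

lemma diagm_cong: "(\<And>j. j < n \<Longrightarrow> f j = g j) \<Longrightarrow> diagm n f = diagm n g"
  by (rule eq_matI) auto

lemma final_arith:
  fixes Dd \<sigma> :: "nat \<Rightarrow> real" and X :: "real vec"
  assumes d2: "d \<ge> 2" and i: "i < d" and sp: "\<forall>j<d. \<sigma> j > 0" and \<nu>: "\<nu> > 0"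
    and Dnn: "\<forall>j<d. Dd j \<ge> 0" and Di: "Dd i = 0" and Dnz: "\<forall>j<d. j \<noteq> i \<longrightarrow> Dd j \<noteq> 0"
    and X: "X \<in> carrier_vec d"
  shows "ln (\<Prod>j<d. normal_density 0 (sqrt ((\<sigma> j)\<^sup>2 + \<nu>\<^sup>2 * Dd j)) (X $ j)) =
           - (real d / 2) * ln (2 * pi) - (\<Sum>j<d. ln (\<sigma> j))
           - (real d - 1) * ln \<nu>
           + (1 / 2) * (X \<bullet> ((diagm d (\<lambda>j. \<nu>\<^sup>2 * Dd j / ((\<sigma> j)\<^sup>2 * ((\<sigma> j)\<^sup>2 + \<nu>\<^sup>2 * Dd j)))
                               - minv (diagm d (\<lambda>j. (\<sigma> j)\<^sup>2))) *\<^sub>v X))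
           - (1 / 2) * ln (det (mat_delete (diagm d Dd) i i))
           - (1 / 2) * ln (det (minv (mat_delete (diagm d (\<lambda>j. (\<sigma> j)\<^sup>2)) i i)
                                + (1 / \<nu>\<^sup>2) \<cdot>\<^sub>m minv (mat_delete (diagm d Dd) i i)))"
proof -
  define T where "T j = (\<sigma> j)\<^sup>2 + \<nu>\<^sup>2 * Dd j" for j
  define A where "A = {..<d} - {i}"
  have Tpos: "T j > 0" if "j < d" for j
  proof -
    have "\<sigma> j > 0" "Dd j \<ge> 0" using that sp Dnn by auto
    then show ?thesis unfolding T_def by (intro add_pos_nonneg) auto
  qed
  have Dpos: "Dd j > 0" if "j \<in> A" for j using that Dnn Dnz unfolding A_def
    by (metis DiffE insertCI lessThan_iff order_le_imp_less_or_eq)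
  have finA: "finite A" unfolding A_def by simp
  have cardA: "card A = d - 1" unfolding A_def using i by simp
  have Asub: "j \<in> A \<Longrightarrow> j < d" for j unfolding A_def by simp
  have ndpos: "normal_density 0 (sqrt (T j)) (X $ j) > 0" if "j < d" for j
    using Tpos[OF that] by (intro normal_density_pos) simp
  have LHS: "ln (\<Prod>j<d. normal_density 0 (sqrt (T j)) (X $ j))
      = (\<Sum>j<d. - (1/2) * ln (2 * pi) - (1/2) * ln (T j) - (X $ j)\<^sup>2 / (2 * T j))"
  proof -
    have "ln (\<Prod>j<d. normal_density 0 (sqrt (T j)) (X $ j)) = (\<Sum>j<d. ln (normal_density 0 (sqrt (T j)) (X $ j)))"
      using ndpos by (intro ln_prod) (auto simp: less_imp_neq[symmetric])
    also have "\<dots> = (\<Sum>j<d. - (1/2) * ln (2 * pi) - (1/2) * ln (T j) - (X $ j)\<^sup>2 / (2 * T j))"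
      using Tpos by (intro sum.cong refl ln_nd0) auto
    finally show ?thesis .
  qed
  have Q: "X \<bullet> ((diagm d (\<lambda>j. \<nu>\<^sup>2 * Dd j / ((\<sigma> j)\<^sup>2 * ((\<sigma> j)\<^sup>2 + \<nu>\<^sup>2 * Dd j)))
                               - minv (diagm d (\<lambda>j. (\<sigma> j)\<^sup>2))) *\<^sub>v X) = (\<Sum>j<d. - ((X $ j)\<^sup>2 / T j))"
  proof -
    have "minv (diagm d (\<lambda>j. (\<sigma> j)\<^sup>2)) = diagm d (\<lambda>j. 1 / (\<sigma> j)\<^sup>2)"
      using sp by (intro minv_diagm) auto
    then have "X \<bullet> ((diagm d (\<lambda>j. \<nu>\<^sup>2 * Dd j / ((\<sigma> j)\<^sup>2 * ((\<sigma> j)\<^sup>2 + \<nu>\<^sup>2 * Dd j)))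
                               - minv (diagm d (\<lambda>j. (\<sigma> j)\<^sup>2))) *\<^sub>v X)
       = (\<Sum>j<d. (\<nu>\<^sup>2 * Dd j / ((\<sigma> j)\<^sup>2 * ((\<sigma> j)\<^sup>2 + \<nu>\<^sup>2 * Dd j)) - 1 / (\<sigma> j)\<^sup>2) * (X $ j)\<^sup>2)"
      by (simp add: diagm_minus diagm_quad[OF X])
    also have "\<dots> = (\<Sum>j<d. - ((X $ j)\<^sup>2 / T j))"
    proof (rule sum.cong[OF refl])
      fix j assume "j \<in> {..<d}"
      then have j: "j < d" by simp
      have "\<sigma> j > 0" using sp j by simp
      then have s0: "(\<sigma> j)\<^sup>2 > 0" by simp
      have t0: "T j > 0" using Tpos[OF j] .
      have tt: "(\<sigma> j)\<^sup>2 + \<nu>\<^sup>2 * Dd j = T j" by (simp add: T_def)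
      have e: "\<nu>\<^sup>2 * Dd j = T j - (\<sigma> j)\<^sup>2" by (simp add: T_def)
      have "(T j - (\<sigma> j)\<^sup>2) / ((\<sigma> j)\<^sup>2 * T j) - 1 / (\<sigma> j)\<^sup>2 = - 1 / T j"
        using s0 t0 by (simp add: field_simps)
      then have "\<nu>\<^sup>2 * Dd j / ((\<sigma> j)\<^sup>2 * ((\<sigma> j)\<^sup>2 + \<nu>\<^sup>2 * Dd j)) - 1 / (\<sigma> j)\<^sup>2 = - 1 / T j"
        unfolding tt unfolding e .
      then show "(\<nu>\<^sup>2 * Dd j / ((\<sigma> j)\<^sup>2 * ((\<sigma> j)\<^sup>2 + \<nu>\<^sup>2 * Dd j)) - 1 / (\<sigma> j)\<^sup>2) * (X $ j)\<^sup>2 = - ((X $ j)\<^sup>2 / T j)"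
        by simp
    qed
    finally show ?thesis .
  qed
  have sne: "\<And>j. j < d \<Longrightarrow> \<sigma> j \<noteq> 0" using sp by (metis less_irrefl)
  let ?sk = "\<lambda>j. if j < i then j else Suc j"
  have skd: "?sk j < d" "?sk j \<noteq> i" if "j < d - 1" for j using that i by auto
  have det1: "det (mat_delete (diagm d Dd) i i) = (\<Prod>j\<in>A. Dd j)"
    unfolding mat_delete_diagm[OF i] det_diagm A_def using skip_prod[OF i] .
  have m1: "minv (mat_delete (diagm d (\<lambda>j. (\<sigma> j)\<^sup>2)) i i) = diagm (d - 1) (\<lambda>j. 1 / (\<sigma> (?sk j))\<^sup>2)"
    unfolding mat_delete_diagm[OF i] using sne skd by (intro minv_diagm) auto
  have m2: "minv (mat_delete (diagm d Dd) i i) = diagm (d - 1) (\<lambda>j. 1 / Dd (?sk j))"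
    unfolding mat_delete_diagm[OF i] using Dnz skd by (intro minv_diagm) auto
  have det2: "det (minv (mat_delete (diagm d (\<lambda>j. (\<sigma> j)\<^sup>2)) i i)
                                + (1 / \<nu>\<^sup>2) \<cdot>\<^sub>m minv (mat_delete (diagm d Dd) i i))
       = (\<Prod>j\<in>A. 1 / (\<sigma> j)\<^sup>2 + 1 / \<nu>\<^sup>2 * (1 / Dd j))"
    unfolding m1 m2 diagm_add det_diagm A_def
    using skip_prod[OF i, of "\<lambda>j. 1 / (\<sigma> j)\<^sup>2 + 1 / \<nu>\<^sup>2 * (1 / Dd j)"] by simp
  have lndet1: "ln (\<Prod>j\<in>A. Dd j) = (\<Sum>j\<in>A. ln (Dd j))"
    by (rule ln_prod[OF finA]) (use Dpos in \<open>metis less_irrefl\<close>)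
  have lndet2: "ln (\<Prod>j\<in>A. 1 / (\<sigma> j)\<^sup>2 + 1 / \<nu>\<^sup>2 * (1 / Dd j)) = (\<Sum>j\<in>A. ln (1 / (\<sigma> j)\<^sup>2 + 1 / \<nu>\<^sup>2 * (1 / Dd j)))"
    using Dpos finA sp Asub \<nu> by (intro ln_prod) (auto intro!: add_pos_pos less_imp_neq[symmetric])
  have keyA: "ln (Dd j) + ln (1 / (\<sigma> j)\<^sup>2 + 1 / \<nu>\<^sup>2 * (1 / Dd j)) = ln (T j) - 2 * ln (\<sigma> j) - 2 * ln \<nu>"
    if "j \<in> A" for j
  proof -
    have D0: "Dd j > 0" using Dpos[OF that] .
    have s0: "\<sigma> j > 0" using sp Asub[OF that] by simp
    have c0: "1 / (\<sigma> j)\<^sup>2 + 1 / \<nu>\<^sup>2 * (1 / Dd j) > 0" using D0 s0 \<nu> by (simp add: add_pos_pos)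
    have "Dd j * (1 / (\<sigma> j)\<^sup>2 + 1 / \<nu>\<^sup>2 * (1 / Dd j)) = T j / ((\<sigma> j)\<^sup>2 * \<nu>\<^sup>2)"
      unfolding T_def using D0 s0 \<nu> by (simp add: field_simps)
    moreover have "ln (Dd j * (1 / (\<sigma> j)\<^sup>2 + 1 / \<nu>\<^sup>2 * (1 / Dd j))) = ln (Dd j) + ln (1 / (\<sigma> j)\<^sup>2 + 1 / \<nu>\<^sup>2 * (1 / Dd j))"
      using D0 c0 by (subst ln_mult) auto
    ultimately have "ln (Dd j) + ln (1 / (\<sigma> j)\<^sup>2 + 1 / \<nu>\<^sup>2 * (1 / Dd j)) = ln (T j / ((\<sigma> j)\<^sup>2 * \<nu>\<^sup>2))"
      by simp
    also have "\<dots> = ln (T j) - 2 * ln (\<sigma> j) - 2 * ln \<nu>"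
      using Tpos[OF Asub[OF that]] s0 \<nu> by (simp add: ln_div ln_mult ln_realpow)
    finally show ?thesis .
  qed
  have Ti: "ln (T i) = 2 * ln (\<sigma> i)" unfolding T_def Di using sp i by (simp add: ln_realpow)
  have sumT: "(\<Sum>j<d. ln (T j)) = ln (T i) + (\<Sum>j\<in>A. ln (T j))"
    unfolding A_def using i by (simp add: sum.remove)
  have sums: "(\<Sum>j<d. ln (\<sigma> j)) = ln (\<sigma> i) + (\<Sum>j\<in>A. ln (\<sigma> j))"
    unfolding A_def using i by (simp add: sum.remove)
  have sumA: "(\<Sum>j\<in>A. ln (T j)) = (\<Sum>j\<in>A. ln (Dd j)) + (\<Sum>j\<in>A. ln (1 / (\<sigma> j)\<^sup>2 + 1 / \<nu>\<^sup>2 * (1 / Dd j)))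
        + 2 * (\<Sum>j\<in>A. ln (\<sigma> j)) + 2 * (real d - 1) * ln \<nu>"
  proof -
    have "(\<Sum>j\<in>A. ln (T j)) = (\<Sum>j\<in>A. (ln (Dd j) + ln (1 / (\<sigma> j)\<^sup>2 + 1 / \<nu>\<^sup>2 * (1 / Dd j))) + 2 * ln (\<sigma> j) + 2 * ln \<nu>)"
      using keyA by (intro sum.cong) auto
    also have "\<dots> = (\<Sum>j\<in>A. ln (Dd j)) + (\<Sum>j\<in>A. ln (1 / (\<sigma> j)\<^sup>2 + 1 / \<nu>\<^sup>2 * (1 / Dd j)))
        + 2 * (\<Sum>j\<in>A. ln (\<sigma> j)) + real (card A) * (2 * ln \<nu>)"
      by (simp add: sum.distrib sum_distrib_left)
    also have "real (card A) = real d - 1" using cardA d2 by simp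
    finally show ?thesis by simp
  qed
  have LHS2: "(\<Sum>j<d. - (1/2) * ln (2 * pi) - (1/2) * ln (T j) - (X $ j)\<^sup>2 / (2 * T j))
      = - (real d / 2) * ln (2 * pi) - (1/2) * (\<Sum>j<d. ln (T j)) + (1/2) * (\<Sum>j<d. - ((X $ j)\<^sup>2 / T j))"
    by (simp add: sum.distrib sum_subtractf sum_distrib_left sum_divide_distrib[symmetric] sum_negf algebra_simps)
  show ?thesis
    unfolding Q det1 det2 lndet1 lndet2 unfolding T_def[symmetric] LHS LHS2 sumT sums sumA Ti
    by (simp add: algebra_simps)
qed

theorem theorem1:
  fixes d :: nat and \<sigma> :: "nat \<Rightarrow> real" and \<nu> :: real
    and P :: "real mat" and X :: "real vec" and i :: nat
  defines "Sig \<equiv> diagm d (\<lambda>j. (\<sigma> j)\<^sup>2)"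
      and "D \<equiv> Dmat d P X"
      and "S \<equiv> diagm d (\<lambda>j. \<nu>\<^sup>2 * Dmat d P X $$ (j,j) / ((\<sigma> j)\<^sup>2 * ((\<sigma> j)\<^sup>2 + \<nu>\<^sup>2 * Dmat d P X $$ (j,j))))"
  assumes "d \<ge> 2"
      and "\<forall>j<d. \<sigma> j > 0"
      and "\<nu> > 0"
      and "is_perm_mat d P"
      and "X \<in> carrier_vec d"
      and "i < d" and "D $$ (i,i) = 0"
      and "\<forall>j<d. j \<noteq> i \<longrightarrow> D $$ (j,j) \<noteq> 0"
  shows "ln (marg_lik d Sig \<nu> P X) =
           - (real d / 2) * ln (2 * pi) - (\<Sum>j<d. ln (\<sigma> j))
           - (real d - 1) * ln \<nu>
           + (1 / 2) * (X \<bullet> ((S - minv Sig) *\<^sub>v X))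
           - (1 / 2) * ln (det (mat_delete D i i))
           - (1 / 2) * ln (det (minv (mat_delete Sig i i)
                                + (1 / \<nu>\<^sup>2) \<cdot>\<^sub>m minv (mat_delete D i i)))"
proof -
  have d2: "d \<ge> 2" and sp: "\<forall>j<d. \<sigma> j > 0" and \<nu>: "\<nu> > 0" and pm: "is_perm_mat d P"
    and X: "X \<in> carrier_vec d" and i: "i < d" and Di0: "D $$ (i,i) = 0"
    and Dnz0: "\<forall>j<d. j \<noteq> i \<longrightarrow> D $$ (j,j) \<noteq> 0" using assms by auto
  obtain \<pi> where p: "\<pi> permutes {..<d}" and Pe: "P = pmat d \<pi>"
    using pm unfolding is_perm_mat_def pmat_def by blast
  define Y where "Y = (\<lambda>m. X $ (\<pi> m))"
  define s where "s = (\<lambda>k. if k < d then \<sigma> (\<pi> k) else 1)"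
  have pin: "\<And>k. k < d \<Longrightarrow> \<pi> k < d" using permutes_in_image[OF p] by simp
  have ipi: "\<And>k. iperm \<pi> (\<pi> k) = k" using permutes_inverses(2)[OF p] by simp
  have spos: "\<forall>k. s k > 0" using sp pin by (auto simp: s_def)
  define Dd where "Dd = (\<lambda>j. ((P * Gmat d * transpose_mat P) *\<^sub>v vec d (\<lambda>k. (X $ k)\<^sup>2)) $ j)"
  have Dmat_eq: "Dmat d P X = diagm d Dd" unfolding Dmat_def Dd_def ..
  have Dd_D: "\<And>j. j < d \<Longrightarrow> Dmat d P X $$ (j,j) = Dd j" unfolding Dmat_eq by simp
  have Dd_val: "\<And>j. j < d \<Longrightarrow> Dd j = (\<Sum>m<iperm \<pi> j. (X $ (\<pi> m))\<^sup>2)"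
    using D_entry[OF p X] Dd_D unfolding Pe by metis
  have Dnn: "\<forall>j<d. Dd j \<ge> 0" using Dd_val by (simp add: sum_nonneg)
  have DdK: "\<And>k. k < d \<Longrightarrow> Dd (\<pi> k) = (\<Sum>m<k. (Y m)\<^sup>2)"
    using Dd_val[OF pin] ipi unfolding Y_def by simp
  have Di: "Dd i = 0" using Di0 Dd_D[OF i] unfolding D_def by simp
  have Dnz: "\<forall>j<d. j \<noteq> i \<longrightarrow> Dd j \<noteq> 0" using Dnz0 Dd_D unfolding D_def by simp
  have bij: "bij_betw \<pi> {..<d} {..<d}" by (rule permutes_imp_bij[OF p])
  have pw: "gauss_density d (minv (Theta d Sig P l)) X * (\<Prod>p\<in>lower_idx d. normal_density 0 \<nu> (l p))
      = Fn d Y s \<nu> l" for l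
  proof -
    let ?\<mu> = "\<lambda>j. (\<Sum>m<iperm \<pi> j. l (iperm \<pi> j, m) * X $ (\<pi> m))"
    have "gauss_density d (minv (Theta d Sig P l)) X = (\<Prod>j<d. normal_density (?\<mu> j) (\<sigma> j) (X $ j))"
      unfolding Sig_def Pe
      by (rule gauss_eq[OF sp X Theta_facts(2)[OF p sp X] Theta_facts(1)[OF p sp X] Theta_facts(3)[OF p sp X]])
    also have "\<dots> = (\<Prod>k<d. normal_density (?\<mu> (\<pi> k)) (\<sigma> (\<pi> k)) (X $ (\<pi> k)))"
      by (rule prod.reindex_bij_betw[OF bij, symmetric])
    also have "\<dots> = (\<Prod>k<d. normal_density (\<Sum>m<k. l (k,m) * Y m) (s k) (Y k))"
      by (rule prod.cong[OF refl]) (simp add: ipi s_def Y_def)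
    finally show ?thesis unfolding Fn_def by simp
  qed
  have measR: "(\<lambda>l. Fn d Y s \<nu> l) \<in> borel_measurable (PiM (lower_idx d) (\<lambda>_. lborel))"
    unfolding Fn_def
    by (auto intro!: borel_measurable_times borel_measurable_add borel_measurable_sum
        borel_measurable_prod nd_meas nd_meas2 comp_meas borel_measurable_const)
  have Fnn: "\<And>l. Fn d Y s \<nu> l \<ge> 0" by (simp add: Fn_def prod_nonneg)
  have "marg_lik d Sig \<nu> P X = (\<integral>l. Fn d Y s \<nu> l \<partial>PiM (lower_idx d) (\<lambda>_. lborel))"
    unfolding marg_lik_def pw ..
  also have "\<dots> = enn2real (\<integral>\<^sup>+l. ennreal (Fn d Y s \<nu> l) \<partial>PiM (lower_idx d) (\<lambda>_. lborel))"
    by (rule integral_eq_nn_integral[OF measR]) (simp add: Fnn)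
  also have "\<dots> = (\<Prod>k<d. normal_density 0 (sqrt ((s k)\<^sup>2 + \<nu>\<^sup>2 * (\<Sum>m<k. (Y m)\<^sup>2))) (Y k))"
    unfolding block_int[OF \<nu> spos] by (simp add: prod_nonneg)
  also have "\<dots> = (\<Prod>k<d. normal_density 0 (sqrt ((\<sigma> (\<pi> k))\<^sup>2 + \<nu>\<^sup>2 * Dd (\<pi> k))) (X $ (\<pi> k)))"
    by (rule prod.cong[OF refl]) (simp add: DdK s_def Y_def)
  also have "\<dots> = (\<Prod>j<d. normal_density 0 (sqrt ((\<sigma> j)\<^sup>2 + \<nu>\<^sup>2 * Dd j)) (X $ j))"
    by (rule prod.reindex_bij_betw[OF bij])
  finally have mlv: "marg_lik d Sig \<nu> P X = (\<Prod>j<d. normal_density 0 (sqrt ((\<sigma> j)\<^sup>2 + \<nu>\<^sup>2 * Dd j)) (X $ j))" .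
  have S_eq: "S = diagm d (\<lambda>j. \<nu>\<^sup>2 * Dd j / ((\<sigma> j)\<^sup>2 * ((\<sigma> j)\<^sup>2 + \<nu>\<^sup>2 * Dd j)))"
    unfolding S_def by (rule diagm_cong) (simp add: Dd_D)
  have D_eq: "D = diagm d Dd" unfolding D_def Dmat_eq ..
  show ?thesis
    unfolding mlv unfolding S_eq D_eq Sig_def
    by (rule final_arith[OF d2 i sp \<nu> Dnn Di Dnz X])
qed

end
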